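(* Let $s\ge0$ and let $V_1,\ldots,V_n$ be vector subspaces of a finite-dimensional real vector space, each $V_i$ with a fixed generating set $\{v^i_1,\ldots,v^i_{m_i}\}$. Consider the polyhedron $$P=\Big\{(d_1,\ldots,d_n)\in\mathbb R^n:\ d_1\ge0,\ldots,d_n\ge0,\ \sum_{i\in I}d_i+\dim\Big(\sum_{i\in I^c}V_i\Big)\ge s\ \text{for all } I\subset\{1,\ldots,n\}\Big\}.$$ Then every vertex of $P$ is of the form $\widehat J(i)$ for some $(J,i)\in\overline{\mathbb J}$.
   Context: $I^c=\{1,\ldots,n\}\setminus I$; $\sum_{i\in\emptyset}d_i=0$ and the empty sum of subspaces is $\{0\}$. $\mathbb J$ is the family of all tuples $J=(\mathrm j_1,\ldots,\mathrm j_n)$ with $\mathrm j_i\subset\{v^i_1,\ldots,v^i_{m_i}\}$ such that the family formed by all elements of $\mathrm j_1,\ldots,\mathrm j_n$ taken together is linearly independent and $\#\mathrm j_1+\cdots+\#\mathrm j_n\ge s$. For $J\in\mathbb J$, $i\in\{1,\ldots,n\}$, $\widehat J(i)=(\#\mathrm j_1,\ldots,\#\mathrm j_n)+(s-(\#\mathrm j_1+\cdots+\#\mathrm j_n))e_i$ with $e_i$ the canonical basis of $\mathbb R^n$, and $\overline{\mathbb J}=\{(J,i): J\in\mathbb J,\ \widehat J(i)\ge 0 \text{ coordinatewise}\}$. *)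

theory Defs
  imports "HOL-Analysis.Analysis"
begin

definition subspace_sum :: "('n \<Rightarrow> 'a::real_vector set) \<Rightarrow> 'n set \<Rightarrow> 'a set" where
  "subspace_sum V I = {x. \<exists>f. (\<forall>i\<in>I. f i \<in> V i) \<and> x = (\<Sum>i\<in>I. f i)}"

definition polyP :: "real \<Rightarrow> ('n::finite \<Rightarrow> 'a::euclidean_space set) \<Rightarrow> (real^'n) set" where
  "polyP s V = {d. (\<forall>i. d $ i \<ge> 0) \<and>
     (\<forall>I. (\<Sum>i\<in>I. d $ i) + real (dim (subspace_sum V (- I))) \<ge> s)}"

(* The family \<J>: J i is a subset of the i-th generating set G i; the family formed by all
   elements of J 1, ..., J n taken together (as a disjoint union) is linearly independent,
   and the total number of elements is at least s. *)
definition JJ :: "real \<Rightarrow> ('n::finite \<Rightarrow> 'a::euclidean_space set) \<Rightarrow> ('n \<Rightarrow> 'a set) set" where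
  "JJ s G = {J. (\<forall>i. J i \<subseteq> G i) \<and>
     inj_on snd (SIGMA i:UNIV. J i) \<and> independent (\<Union>i. J i) \<and>
     real (\<Sum>i\<in>UNIV. card (J i)) \<ge> s}"

definition Jhat :: "real \<Rightarrow> ('n::finite \<Rightarrow> 'a set) \<Rightarrow> 'n \<Rightarrow> real^'n" where
  "Jhat s J i = (\<chi> k. real (card (J k)) +
      (if k = i then s - real (\<Sum>l\<in>UNIV. card (J l)) else 0))"

definition JJbar :: "real \<Rightarrow> ('n::finite \<Rightarrow> 'a::euclidean_space set) \<Rightarrow> (('n \<Rightarrow> 'a set) \<times> 'n) set" where
  "JJbar s G = {(J, i). J \<in> JJ s G \<and> (\<forall>k. Jhat s J i $ k \<ge> 0)}"

end

theory Submission
  imports Defs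
begin

lemma ss_eq:
  fixes G :: "'n \<Rightarrow> 'a::euclidean_space set"
  assumes "finite X"
  shows "subspace_sum (\<lambda>i. span (G i)) X = span (\<Union>(G ` X))"
  using assms
proof (induction X rule: finite_induct)
  case empty
  then show ?case by (auto simp: subspace_sum_def)
next
  case (insert a F)
  have "subspace_sum (\<lambda>i. span (G i)) (insert a F) =
        {x + y |x y. x \<in> span (G a) \<and> y \<in> subspace_sum (\<lambda>i. span (G i)) F}"
  proof (intro set_eqI iffI)
    fix x assume "x \<in> subspace_sum (\<lambda>i. span (G i)) (insert a F)"
    then obtain f where f: "\<forall>i\<in>insert a F. f i \<in> span (G i)" "x = (\<Sum>i\<in>insert a F. f i)"
      by (auto simp: subspace_sum_def)
    then have "x = f a + (\<Sum>i\<in>F. f i)" using insert by simp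
    then show "x \<in> {x + y |x y. x \<in> span (G a) \<and> y \<in> subspace_sum (\<lambda>i. span (G i)) F}"
      using f by (auto simp: subspace_sum_def)
  next
    fix x assume "x \<in> {x + y |x y. x \<in> span (G a) \<and> y \<in> subspace_sum (\<lambda>i. span (G i)) F}"
    then obtain u f where u: "u \<in> span (G a)" "\<forall>i\<in>F. f i \<in> span (G i)" "x = u + (\<Sum>i\<in>F. f i)"
      by (auto simp: subspace_sum_def)
    define f' where "f' = f(a := u)"
    have "(\<Sum>i\<in>F. f' i) = (\<Sum>i\<in>F. f i)"
      using insert(2) by (intro sum.cong) (auto simp: f'_def)
    then have "x = (\<Sum>i\<in>insert a F. f' i)" using insert u by (simp add: f'_def)
    moreover have "\<forall>i\<in>insert a F. f' i \<in> span (G i)" using u insert(2) by (auto simp: f'_def)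
    ultimately show "x \<in> subspace_sum (\<lambda>i. span (G i)) (insert a F)"
      by (auto simp: subspace_sum_def)
  qed
  also have "\<dots> = span (G a \<union> \<Union>(G ` F))"
    by (simp add: span_Un insert.IH)
  finally show ?case by simp
qed

definition rk :: "('n \<Rightarrow> 'a::euclidean_space set) \<Rightarrow> 'n set \<Rightarrow> nat" where
  "rk G X = dim (span (\<Union>(G ` X)))"

lemma rk_ss:
  fixes G :: "'n::finite \<Rightarrow> 'a::euclidean_space set"
  shows "dim (subspace_sum (\<lambda>i. span (G i)) X) = rk G X"
  by (simp add: ss_eq rk_def)

lemma rk_mono: "A \<subseteq> B \<Longrightarrow> rk G A \<le> rk G B"
  unfolding rk_def by (intro dim_subset span_mono) auto

lemma rk_empty: "rk G {} = 0"
  by (simp add: rk_def)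

lemma rk_submod: "rk G (A \<union> B) + rk G (A \<inter> B) \<le> rk G A + rk G B"
proof -
  let ?S = "span (\<Union>(G ` A))" and ?T = "span (\<Union>(G ` B))"
  have e: "span (\<Union>(G ` (A \<union> B))) = {x + y |x y. x \<in> ?S \<and> y \<in> ?T}"
    by (simp add: image_Un span_Un)
  have "span (\<Union>(G ` (A \<inter> B))) \<subseteq> ?S \<inter> ?T"
    by (intro Int_greatest span_mono) auto
  then have "dim (span (\<Union>(G ` (A \<inter> B)))) \<le> dim (?S \<inter> ?T)" by (rule dim_subset)
  moreover have "dim {x + y |x y. x \<in> ?S \<and> y \<in> ?T} + dim (?S \<inter> ?T) = dim ?S + dim ?T"
    by (rule dim_sums_Int) auto
  ultimately show ?thesis unfolding rk_def e by linarith
qed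

lemma extend:
  fixes G :: "'n \<Rightarrow> 'a::euclidean_space set" and J :: "'n \<Rightarrow> 'a set"
  assumes JG: "\<forall>k. J k \<subseteq> G k" and disj: "\<forall>k l. k \<noteq> l \<longrightarrow> J k \<inter> J l = {}"
    and ind: "independent (\<Union>k. J k)"
    and sp: "span (\<Union>k. J k) = span (\<Union>(G ` T))" and off: "\<forall>k. k \<notin> T \<longrightarrow> J k = {}"
    and iT: "i \<notin> T"
  obtains C where "C \<subseteq> G i" "\<forall>k l. k \<noteq> l \<longrightarrow> (J(i:=C)) k \<inter> (J(i:=C)) l = {}"
    "independent (\<Union>k. (J(i:=C)) k)"
    "span (\<Union>k. (J(i:=C)) k) = span (\<Union>(G ` insert i T))"
    "card C + rk G T = rk G (insert i T)"
proof -
  let ?B = "\<Union>k. J k"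
  obtain B' where B': "?B \<subseteq> B'" "B' \<subseteq> ?B \<union> G i" "independent B'" "?B \<union> G i \<subseteq> span B'"
    using maximal_independent_subset_extend[of ?B "?B \<union> G i"] ind by blast
  define C where "C = B' - ?B"
  have Ji: "J i = {}" using off iT by auto
  have CG: "C \<subseteq> G i" using B' by (auto simp: C_def)
  have U: "(\<Union>k. (J(i:=C)) k) = B'"
  proof -
    have "(\<Union>k. (J(i:=C)) k) = C \<union> ?B"
      using Ji by (auto split: if_splits)
    then show ?thesis using B' by (auto simp: C_def)
  qed
  have d2: "\<forall>k l. k \<noteq> l \<longrightarrow> (J(i:=C)) k \<inter> (J(i:=C)) l = {}"
    using disj by (auto simp: C_def)
  have sp2: "span B' = span (\<Union>(G ` insert i T))"
  proof
    have "B' \<subseteq> span (\<Union>(G ` insert i T))"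
    proof
      fix x assume "x \<in> B'"
      then have "x \<in> ?B \<or> x \<in> G i" using B' by auto
      moreover have "?B \<subseteq> span (\<Union>(G ` insert i T))"
        using span_superset[of ?B] sp span_mono[of "\<Union>(G ` T)" "\<Union>(G ` insert i T)"] by auto
      ultimately show "x \<in> span (\<Union>(G ` insert i T))"
        using span_superset[of "\<Union>(G ` insert i T)"] by auto
    qed
    then show "span B' \<subseteq> span (\<Union>(G ` insert i T))" by (simp add: span_minimal)
  next
    have "\<Union>(G ` T) \<subseteq> span ?B" using sp span_superset[of "\<Union>(G ` T)"] by simp
    also have "span ?B \<subseteq> span B'" using B' by (simp add: span_mono)
    finally have "\<Union>(G ` insert i T) \<subseteq> span B'" using B' by auto
    then show "span (\<Union>(G ` insert i T)) \<subseteq> span B'" by (simp add: span_minimal)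
  qed
  have fB': "finite B'" using B'(3) by (rule finiteI_independent)
  have "card B' = card C + card ?B"
    unfolding C_def using fB' B'(1) by (metis card_Diff_subset finite_subset card_mono le_add_diff_inverse2)
  moreover have "card B' = rk G (insert i T)"
    using dim_span_eq_card_independent[OF B'(3)] sp2 by (simp add: rk_def)
  moreover have "card ?B = rk G T"
    using dim_span_eq_card_independent[OF ind] sp by (simp add: rk_def)
  ultimately have "card C + rk G T = rk G (insert i T)" by simp
  then show ?thesis using that CG d2 U B'(3) sp2 by simp
qed

lemma perturb:
  fixes d z :: "real^'n::finite" and V :: "'n \<Rightarrow> 'a::euclidean_space set"
  assumes ext: "d extreme_point_of polyP s V"
    and z0: "z \<noteq> 0"
    and zk: "\<forall>k. \<bar>z$k\<bar> \<le> 1" and zN: "\<forall>k. d$k = 0 \<longrightarrow> z$k = 0"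
    and zI: "\<forall>I. \<bar>\<Sum>i\<in>I. z$i\<bar> \<le> 1"
    and zt: "\<forall>I. (\<Sum>i\<in>I. d$i) + real (dim (subspace_sum V (-I))) = s \<longrightarrow> (\<Sum>i\<in>I. z$i) = 0"
  shows False
proof -
  have dP: "d \<in> polyP s V" using ext by (simp add: extreme_point_of_def)
  define h where "h I = (\<Sum>i\<in>I. d$i) + real (dim (subspace_sum V (-I)))" for I
  have hs: "h I \<ge> s" for I using dP by (simp add: polyP_def h_def)
  have dnn: "d$k \<ge> 0" for k using dP by (simp add: polyP_def)
  define E where "E = (\<lambda>I. h I - s) ` {I. h I \<noteq> s} \<union> (\<lambda>k. d$k) ` {k. d$k \<noteq> 0} \<union> {1}"
  have fE: "finite E" unfolding E_def by simp
  have Epos: "\<forall>e\<in>E. e > 0" unfolding E_def using hs dnn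
    by (force simp: order_le_less)
  define \<epsilon> where "\<epsilon> = Min E"
  have ep: "\<epsilon> > 0" unfolding \<epsilon>_def using fE Epos by (auto simp: E_def)
  have e1: "\<epsilon> \<le> h I - s" if "h I \<noteq> s" for I
    unfolding \<epsilon>_def using fE that by (intro Min_le) (auto simp: E_def)
  have e2: "\<epsilon> \<le> d$k" if "d$k \<noteq> 0" for k
    unfolding \<epsilon>_def using fE that by (intro Min_le) (auto simp: E_def)
  have inP: "d + c *\<^sub>R z \<in> polyP s V" if c: "\<bar>c\<bar> \<le> \<epsilon>" for c
  proof -
    have "(d + c *\<^sub>R z)$k \<ge> 0" for k
    proof (cases "d$k = 0")
      case True then show ?thesis using zN by simp
    next
      case False
      have "\<bar>c * z$k\<bar> \<le> \<epsilon> * 1"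
        unfolding abs_mult using c zk[rule_format, of k] ep by (intro mult_mono) auto
      then show ?thesis using e2[OF False] by simp
    qed
    moreover have "(\<Sum>i\<in>I. (d + c *\<^sub>R z)$i) + real (dim (subspace_sum V (-I))) \<ge> s" for I
    proof -
      have eq: "(\<Sum>i\<in>I. (d + c *\<^sub>R z)$i) + real (dim (subspace_sum V (-I))) = h I + c * (\<Sum>i\<in>I. z$i)"
        by (simp add: h_def sum.distrib sum_distrib_left)
      show ?thesis
      proof (cases "h I = s")
        case True
        then show ?thesis using zt[rule_format, of I] unfolding eq by (simp add: h_def)
      next
        case False
        have "\<bar>c * (\<Sum>i\<in>I. z$i)\<bar> \<le> \<epsilon> * 1"
          unfolding abs_mult using c zI[rule_format, of I] ep by (intro mult_mono) auto
        then show ?thesis using e1[OF False] unfolding eq by linarith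
      qed
    qed
    ultimately show ?thesis by (simp add: polyP_def)
  qed
  let ?a = "d + \<epsilon> *\<^sub>R z" and ?b = "d + (-\<epsilon>) *\<^sub>R z"
  have aP: "?a \<in> polyP s V" using inP ep by simp
  have bP: "?b \<in> polyP s V" using inP[of "-\<epsilon>"] ep by simp
  have ne: "?a \<noteq> ?b"
  proof
    assume "?a = ?b"
    then have "\<epsilon> *\<^sub>R z = (-\<epsilon>) *\<^sub>R z" by simp
    then show False using z0 ep scaleR_cancel_right[of \<epsilon> z "-\<epsilon>"] by simp
  qed
  have mid: "midpoint ?a ?b = d" by (simp add: midpoint_def vec_eq_iff algebra_simps)
  have "d \<in> open_segment ?a ?b" using ne mid midpoint_in_open_segment by metis
  then show False using ext aP bP by (auto simp: extreme_point_of_def)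
qed

lemma sum_compl:
  fixes f :: "'n::finite \<Rightarrow> real"
  shows "(\<Sum>i\<in>-T. f i) = (\<Sum>i\<in>UNIV. f i) - (\<Sum>i\<in>T. f i)"
proof -
  have "(\<Sum>i\<in>-T \<union> T. f i) = (\<Sum>i\<in>-T. f i) + (\<Sum>i\<in>T. f i)"
    by (rule sum.union_disjoint) auto
  moreover have "-T \<union> T = UNIV" by auto
  ultimately show ?thesis by simp
qed

lemma union_closed_Union:
  assumes "finite H" "H \<noteq> {}" "H \<subseteq> F" "\<forall>A\<in>F. \<forall>B\<in>F. A \<union> B \<in> F"
  shows "\<Union>H \<in> F"
  using assms by (induction H rule: finite_ne_induct) auto

lemma disj_inj: "\<forall>k l. k \<noteq> l \<longrightarrow> J k \<inter> J l = {} \<Longrightarrow> inj_on snd (SIGMA i:UNIV. J i)"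
  by (auto simp: inj_on_def)

lemma sum_ind: "(\<Sum>k\<in>I. (if k = (i::'n::finite) then 1 else 0::real)) = (if i \<in> I then 1 else 0)"
  by (simp add: sum.delta)

theorem mainTheorem4:
  fixes s :: real
    and G :: "'n::finite \<Rightarrow> 'a::euclidean_space set"
    and d :: "real^'n"
  assumes "s \<ge> 0"
    and "\<And>i. finite (G i)"
    and "d extreme_point_of polyP s (\<lambda>i. span (G i))"
  shows "\<exists>J i. (J, i) \<in> JJbar s G \<and> d = Jhat s J i"
proof -
  note ext = assms(3)
  have dP: "d \<in> polyP s (\<lambda>i. span (G i))" using ext by (simp add: extreme_point_of_def)
  have dnn: "d$k \<ge> 0" for k using dP by (simp add: polyP_def)
  have hs: "(\<Sum>i\<in>I. d$i) + real (rk G (-I)) \<ge> s" for I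
    using dP by (simp add: polyP_def rk_ss)
  define N where "N = {i. d$i \<noteq> 0}"
  define D where "D = (\<Sum>i\<in>UNIV. d$i)"
  define tight where "tight I \<longleftrightarrow> (\<Sum>i\<in>I. d$i) + real (rk G (-I)) = s" for I
  have pert: False if "z \<noteq> 0" "\<forall>k. \<bar>z$k\<bar> \<le> 1" "\<forall>k. d$k = 0 \<longrightarrow> z$k = 0"
    "\<forall>I. \<bar>\<Sum>i\<in>I. z$i\<bar> \<le> 1" "\<forall>I. tight I \<longrightarrow> (\<Sum>i\<in>I. z$i) = 0" for z :: "real^'n"
    using perturb[OF ext that(1-4)] that(5) by (simp add: tight_def rk_ss)
  have DS: "D \<ge> s" using hs[of UNIV] by (simp add: D_def rk_empty)
  have tight_Un: "tight (A \<union> B)" if "tight A" "tight B" for A B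
  proof -
    have "(\<Sum>i\<in>A \<union> B. d$i) + (\<Sum>i\<in>A \<inter> B. d$i) = (\<Sum>i\<in>A. d$i) + (\<Sum>i\<in>B. d$i)"
      by (rule sum.union_inter) auto
    moreover have "rk G (-A \<union> -B) + rk G (-A \<inter> -B) \<le> rk G (-A) + rk G (-B)" by (rule rk_submod)
    moreover have "-(A \<union> B) = -A \<inter> -B" "-(A \<inter> B) = -A \<union> -B" by auto
    moreover note hs[of "A \<union> B"] hs[of "A \<inter> B"]
    ultimately show ?thesis using that unfolding tight_def
      by (smt (verit, ccfv_SIG) of_nat_add of_nat_mono)
  qed
  have Ntight: "\<exists>I. tight I \<and> i \<in> I" if "i \<in> N" for i
  proof (rule ccontr)
    assume a: "\<not> (\<exists>I. tight I \<and> i \<in> I)"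
    define z :: "real^'n" where "z = (\<chi> k. if k = i then 1 else 0)"
    have zk: "z$k = (if k = i then 1 else 0)" for k by (simp add: z_def)
    show False
    proof (rule pert[of z])
      show "z \<noteq> 0" using zk[of i] by auto
      show "\<forall>k. \<bar>z$k\<bar> \<le> 1" by (simp add: zk)
      show "\<forall>k. d$k = 0 \<longrightarrow> z$k = 0" using that by (simp add: zk N_def)
      show "\<forall>I. \<bar>\<Sum>i\<in>I. z$i\<bar> \<le> 1" by (simp add: zk sum_ind)
      show "\<forall>I. tight I \<longrightarrow> (\<Sum>i\<in>I. z$i) = 0" using a by (auto simp: zk sum_ind)
    qed
  qed
  have Ds: "D = s"
  proof (cases "N = {}")
    case True
    then have "D = 0" by (simp add: D_def N_def)
    then show ?thesis using DS assms(1) by simp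
  next
    case False
    then obtain i where "i \<in> N" by auto
    then obtain I0 where I0: "tight I0" using Ntight by auto
    let ?F = "{I. tight I}"
    have "\<Union>?F \<in> ?F"
      by (rule union_closed_Union[of ?F]) (use I0 tight_Un in auto)
    then have tW: "tight (\<Union>?F)" by simp
    have NW: "N \<subseteq> \<Union>?F" using Ntight by blast
    have "D = (\<Sum>i\<in>\<Union>?F. d$i) + (\<Sum>i\<in>-\<Union>?F. d$i)"
      using sum_compl[of "\<lambda>i. d$i" "\<Union>?F"] by (simp add: D_def)
    moreover have "(\<Sum>i\<in>-\<Union>?F. d$i) = 0"
      by (rule sum.neutral) (use NW in \<open>auto simp: N_def\<close>)
    ultimately show ?thesis using tW DS unfolding tight_def by simp
  qed
  define tt where "tt T \<longleftrightarrow> (\<Sum>i\<in>T. d$i) = real (rk G T)" for T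
  have tight_tt: "tight (-T) \<longleftrightarrow> tt T" for T
    using sum_compl[of "\<lambda>i. d$i" T] Ds by (auto simp: tight_def tt_def D_def)
  have dle: "(\<Sum>i\<in>T. d$i) \<le> real (rk G T)" for T
    using hs[of "-T"] sum_compl[of "\<lambda>i. d$i" T] Ds by (simp add: D_def)
  have tt_Un: "tt (A \<union> B)" and tt_Int: "tt (A \<inter> B)" if "tt A" "tt B" for A B
  proof -
    have "(\<Sum>i\<in>A \<union> B. d$i) + (\<Sum>i\<in>A \<inter> B. d$i) = (\<Sum>i\<in>A. d$i) + (\<Sum>i\<in>B. d$i)"
      by (rule sum.union_inter) auto
    moreover have "rk G (A \<union> B) + rk G (A \<inter> B) \<le> rk G A + rk G B" by (rule rk_submod)
    moreover note dle[of "A \<union> B"] dle[of "A \<inter> B"]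
    ultimately show "tt (A \<union> B)" "tt (A \<inter> B)" using that unfolding tt_def
      by (smt (verit, ccfv_SIG) of_nat_add of_nat_mono)+
  qed
  have tt_empty: "tt {}" by (simp add: tt_def rk_empty)
  have tt_N: "tt (T \<inter> N)" if "tt T" for T
  proof -
    have "(\<Sum>i\<in>T \<inter> N. d$i) = (\<Sum>i\<in>T. d$i)"
      by (rule sum.mono_neutral_left) (auto simp: N_def)
    moreover have "rk G (T \<inter> N) \<le> rk G T" by (rule rk_mono) auto
    moreover note dle[of "T \<inter> N"]
    ultimately show ?thesis using that unfolding tt_def by (smt (verit) of_nat_mono)
  qed
  have insep: False if "i \<in> N" "j \<in> N" "i \<noteq> j" "\<forall>T. tt T \<longrightarrow> (i \<in> T \<longleftrightarrow> j \<in> T)" for i j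
  proof -
    define z :: "real^'n" where "z = (\<chi> k. (if k = i then 1 else 0) - (if k = j then 1 else 0))"
    have zk: "z$k = (if k = i then 1 else 0) - (if k = j then 1 else 0)" for k by (simp add: z_def)
    have zs: "(\<Sum>k\<in>I. z$k) = (if i \<in> I then 1 else 0) - (if j \<in> I then 1 else 0)" for I
      by (simp add: zk sum_subtractf sum_ind)
    show False
    proof (rule pert[of z])
      show "z \<noteq> 0" using zk[of i] that(3) by auto
      show "\<forall>k. \<bar>z$k\<bar> \<le> 1" using that(3) by (simp add: zk)
      show "\<forall>k. d$k = 0 \<longrightarrow> z$k = 0" using that by (simp add: zk N_def)
      show "\<forall>I. \<bar>\<Sum>i\<in>I. z$i\<bar> \<le> 1" by (simp add: zs)
      show "\<forall>I. tight I \<longrightarrow> (\<Sum>i\<in>I. z$i) = 0"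
      proof (intro allI impI)
        fix I assume "tight I"
        then have "tt (-I)" using tight_tt[of "-I"] by simp
        then have "i \<in> -I \<longleftrightarrow> j \<in> -I" using that(4) by blast
        then show "(\<Sum>i\<in>I. z$i) = 0" by (auto simp: zs)
      qed
    qed
  qed
  define good where "good J T \<longleftrightarrow> (\<forall>k. J k \<subseteq> G k) \<and> (\<forall>k l. k \<noteq> l \<longrightarrow> J k \<inter> J l = {}) \<and>
     independent (\<Union>k. J k) \<and> span (\<Union>k. J k) = span (\<Union>(G ` T)) \<and>
     (\<forall>k. k \<notin> T \<longrightarrow> J k = {}) \<and> (\<forall>k\<in>T. real (card (J k)) = d$k)" for J T
  have main: "\<exists>J. good J T" if "T \<subseteq> N" "tt T" for T
    using that
  proof (induction "card T" arbitrary: T rule: less_induct)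
    case less
    show ?case
    proof (cases "T = {}")
      case True
      then show ?thesis by (intro exI[of _ "\<lambda>_. {}"]) (simp add: good_def independent_empty)
    next
      case False
      define F where "F = {S. S \<subset> T \<and> tt S}"
      have fF: "finite F" by simp
      have eF: "{} \<in> F" using False tt_empty by (auto simp: F_def)
      define m where "m = Max (card ` F)"
      have "m \<in> card ` F" unfolding m_def using fF eF by (intro Max_in) auto
      then obtain T' where T': "T' \<in> F" "card T' = m" by auto
      have mx: "card S \<le> card T'" if "S \<in> F" for S
        using that fF T'(2) unfolding m_def by simp
      have T'T: "T' \<subset> T" "tt T'" using T' by (auto simp: F_def)
      have dich: "(S \<inter> T) \<union> T' = T' \<or> (S \<inter> T) \<union> T' = T" if "tt S" for S
      proof (rule ccontr)
        assume a: "\<not> ?thesis"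
        have "tt ((S \<inter> T) \<union> T')" using tt_Un[OF tt_Int[OF that less.prems(2)] T'T(2)] .
        moreover have "(S \<inter> T) \<union> T' \<subseteq> T" using T'T by auto
        ultimately have "(S \<inter> T) \<union> T' \<in> F" using a by (auto simp: F_def)
        then have "card ((S \<inter> T) \<union> T') \<le> card T'" by (rule mx)
        moreover have "card T' \<le> card ((S \<inter> T) \<union> T')" by (rule card_mono) auto
        ultimately have "card T' = card ((S \<inter> T) \<union> T')" by simp
        then have "(S \<inter> T) \<union> T' = T'"
          by (intro card_subset_eq[symmetric]) auto
        then show False using a by simp
      qed
      obtain i where i: "i \<in> T" "i \<notin> T'" using T'T by auto
      have Tins: "T = insert i T'"
      proof -
        have "j = i" if "j \<in> T" "j \<notin> T'" for j
        proof (rule ccontr)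
          assume "j \<noteq> i"
          moreover have "\<forall>S. tt S \<longrightarrow> (i \<in> S \<longleftrightarrow> j \<in> S)"
          proof (intro allI impI)
            fix S assume "tt S"
            then have "(S \<inter> T) \<union> T' = T' \<or> (S \<inter> T) \<union> T' = T" by (rule dich)
            then show "i \<in> S \<longleftrightarrow> j \<in> S"
            proof
              assume e: "(S \<inter> T) \<union> T' = T'"
              have "i \<notin> S" using e i by (metis IntI UnI1)
              moreover have "j \<notin> S" using e that by (metis IntI UnI1)
              ultimately show ?thesis by simp
            next
              assume e: "(S \<inter> T) \<union> T' = T"
              have "i \<in> S" using e i by (metis IntD1 UnE)
              moreover have "j \<in> S" using e that by (metis IntD1 UnE)
              ultimately show ?thesis by simp
            qed
          qed
          moreover have "i \<in> N" "j \<in> N" using i(1) that(1) less.prems(1) by auto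
          ultimately show False using insep[of i j] by blast
        qed
        then show ?thesis using i T'T(1) by blast
      qed
      have "card T' < card T" using T'T by (simp add: psubset_card_mono)
      moreover have "T' \<subseteq> N" using T'T(1) less.prems(1) by auto
      ultimately obtain J where J: "good J T'" using less.hyps T'T(2) by blast
      have Jp: "\<forall>k. J k \<subseteq> G k" "\<forall>k l. k \<noteq> l \<longrightarrow> J k \<inter> J l = {}"
        "independent (\<Union>k. J k)" "span (\<Union>k. J k) = span (\<Union>(G ` T'))"
        "\<forall>k. k \<notin> T' \<longrightarrow> J k = {}" "\<forall>k\<in>T'. real (card (J k)) = d$k"
        using J unfolding good_def by auto
      obtain C where C: "C \<subseteq> G i" "\<forall>k l. k \<noteq> l \<longrightarrow> (J(i:=C)) k \<inter> (J(i:=C)) l = {}"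
        "independent (\<Union>k. (J(i:=C)) k)"
        "span (\<Union>k. (J(i:=C)) k) = span (\<Union>(G ` insert i T'))"
        "card C + rk G T' = rk G (insert i T')"
        by (rule extend[OF Jp(1-5) i(2)])
      have "d$i = (\<Sum>k\<in>T. d$k) - (\<Sum>k\<in>T'. d$k)" using Tins i by simp
      also have "\<dots> = real (rk G T) - real (rk G T')" using less.prems T'T by (simp add: tt_def)
      also have "\<dots> = real (card C)" using C(5) Tins by simp
      finally have di: "real (card C) = d$i" by simp
      have "good (J(i:=C)) T"
        unfolding good_def
      proof (intro conjI)
        show "\<forall>k. (J(i:=C)) k \<subseteq> G k" using C(1) Jp(1) by simp
        show "\<forall>k l. k \<noteq> l \<longrightarrow> (J(i:=C)) k \<inter> (J(i:=C)) l = {}" by (rule C(2))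
        show "independent (\<Union>k. (J(i:=C)) k)" by (rule C(3))
        show "span (\<Union>k. (J(i:=C)) k) = span (\<Union>(G ` T))" using C(4) Tins by simp
        show "\<forall>k. k \<notin> T \<longrightarrow> (J(i:=C)) k = {}" using Jp(5) Tins by simp
        show "\<forall>k\<in>T. real (card ((J(i:=C)) k)) = d$k" using Jp(6) Tins di by simp
      qed
      then show ?thesis by blast
    qed
  qed
  define F2 where "F2 = {S. S \<subseteq> N \<and> tt S}"
  have cl: "\<forall>A\<in>F2. \<forall>B\<in>F2. A \<union> B \<in> F2" unfolding F2_def using tt_Un by blast
  have "\<Union>F2 \<in> F2"
    by (rule union_closed_Union[OF _ _ subset_refl cl]) (use tt_empty in \<open>auto simp: F2_def\<close>)
  define U where "U = \<Union>F2"
  have UN: "U \<subseteq> N" "tt U" using \<open>\<Union>F2 \<in> F2\<close> by (auto simp: U_def F2_def)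
  have absorb: "S \<inter> N \<subseteq> U" if "tt S" for S
  proof -
    have "S \<inter> N \<in> F2" using tt_N[OF that] by (auto simp: F2_def)
    then show ?thesis unfolding U_def by blast
  qed
  have one: "i = j" if "i \<in> N" "i \<notin> U" "j \<in> N" "j \<notin> U" for i j
  proof (rule ccontr)
    assume "i \<noteq> j"
    moreover have "\<forall>S. tt S \<longrightarrow> (i \<in> S \<longleftrightarrow> j \<in> S)"
      using absorb that by blast
    ultimately show False using insep[of i j] that by blast
  qed
  obtain J where J: "good J U" using main UN by blast
  have Jp: "\<forall>k. J k \<subseteq> G k" "\<forall>k l. k \<noteq> l \<longrightarrow> J k \<inter> J l = {}"
    "independent (\<Union>k. J k)" "span (\<Union>k. J k) = span (\<Union>(G ` U))"
    "\<forall>k. k \<notin> U \<longrightarrow> J k = {}" "\<forall>k\<in>U. real (card (J k)) = d$k"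
    using J unfolding good_def by auto
  have dzero: "d$k = 0" if "k \<notin> N" for k using that by (simp add: N_def)
  show ?thesis
  proof (cases "N \<subseteq> U")
    case True
    define i0 :: 'n where "i0 = undefined"
    have cardk: "real (card (J k)) = d$k" for k
    proof (cases "k \<in> U")
      case False
      then have "k \<notin> N" using True by blast
      then show ?thesis using Jp(5) dzero False by simp
    qed (use Jp(6) in simp)
    have tot: "real (\<Sum>k\<in>UNIV. card (J k)) = s"
      using Ds by (simp add: of_nat_sum cardk D_def)
    have Jh: "Jhat s J i0 = d" unfolding Jhat_def vec_eq_iff using cardk tot by simp
    have "J \<in> JJ s G" unfolding JJ_def using Jp(1) disj_inj[OF Jp(2)] Jp(3) tot by simp
    then have "(J, i0) \<in> JJbar s G" unfolding JJbar_def using Jh dnn by simp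
    then show ?thesis using Jh by blast
  next
    case False
    then obtain i0 where i0: "i0 \<in> N" "i0 \<notin> U" by auto
    have Nins: "N = insert i0 U" using UN(1) i0 one by blast
    obtain C where C: "C \<subseteq> G i0" "\<forall>k l. k \<noteq> l \<longrightarrow> (J(i0:=C)) k \<inter> (J(i0:=C)) l = {}"
        "independent (\<Union>k. (J(i0:=C)) k)"
        "span (\<Union>k. (J(i0:=C)) k) = span (\<Union>(G ` insert i0 U))"
        "card C + rk G U = rk G (insert i0 U)"
      by (rule extend[OF Jp(1-5) i0(2)])
    define J' where "J' = J(i0:=C)"
    have cardk: "real (card (J' k)) = d$k + (if k = i0 then real (card C) - d$i0 else 0)" for k
    proof (cases "k \<in> U")
      case False
      show ?thesis
      proof (cases "k = i0")
        case True then show ?thesis by (simp add: J'_def)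
      next
        case ne: False
        then have "k \<notin> N" using Nins False by blast
        then show ?thesis using Jp(5) dzero False ne by (simp add: J'_def)
      qed
    next
      case True
      then have "k \<noteq> i0" using i0 by blast
      then show ?thesis using Jp(6) True by (simp add: J'_def)
    qed
    have tot: "real (\<Sum>k\<in>UNIV. card (J' k)) = D + (real (card C) - d$i0)"
      by (simp add: of_nat_sum cardk sum.distrib D_def)
    have DN: "(\<Sum>k\<in>N. d$k) = D" unfolding D_def
      by (rule sum.mono_neutral_left) (auto simp: N_def)
    have di0: "d$i0 = D - real (rk G U)"
      using DN Nins i0(2) UN(2) by (simp add: tt_def)
    have cC: "real (card C) = real (rk G N) - real (rk G U)" using C(5) Nins by simp
    have "D \<le> real (rk G N)" using dle[of N] DN by simp
    then have totge: "real (\<Sum>k\<in>UNIV. card (J' k)) \<ge> s" using tot di0 cC Ds by simp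
    have Jh: "Jhat s J' i0 = d" unfolding Jhat_def vec_eq_iff using cardk tot Ds by simp
    have "\<forall>k. J' k \<subseteq> G k" using Jp(1) C(1) by (simp add: J'_def)
    moreover have "inj_on snd (SIGMA i:UNIV. J' i)" using disj_inj[OF C(2)] by (simp add: J'_def)
    moreover have "independent (\<Union>k. J' k)" using C(3) by (simp add: J'_def)
    ultimately have "J' \<in> JJ s G" unfolding JJ_def using totge by simp
    then have "(J', i0) \<in> JJbar s G" unfolding JJbar_def using Jh dnn by simp
    then show ?thesis using Jh by blast
  qed
qed

end
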